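(* Assume the standing setting of the context, let $n\ge2$ and let $\mathbf{M}_\varepsilon^{\otimes n}$ be the product measure on $\mathcal{D}_\varepsilon^n$. For $i\ne j\in\{1,\dots,n\}$ and $T>0$ let $$\mathcal{C}_{i,j}(T)=\{(z_1,\dots,z_n)\in\mathcal{D}_\varepsilon^n:\ z_i=(s_i,x_i),\ z_j=(s_j,x_j),\ s_i=s_j\in[0,T),\ x_i\ne x_j\},\qquad \mathcal{C}=\bigcup_{T\in\mathbb{N}}\bigcup_{i\ne j}\mathcal{C}_{i,j}(T).$$ Then $\mathbf{M}_\varepsilon^{\otimes n}(\mathcal{C})=0$ almost surely.
   Context: Standing setting. Fix $d\in\mathbb{N}$ and $\varepsilon\in(0,1]$ with $\varepsilon^{-1}\in\mathbb{N}$; $\Lambda_\varepsilon=(\varepsilon\mathbb{Z}/\mathbb{Z})^d$, $\mathcal{D}_\varepsilon=[0,\infty)\times\Lambda_\varepsilon$. On a filtered probability space satisfying the usual conditions let $(\mathbb{M}_\varepsilon(t,x))_{t\ge0}$, $x\in\Lambda_\varepsilon$, be càdlàg square-integrable martingales, $\Delta_t\mathbb{M}_\varepsilon(x)=\mathbb{M}_\varepsilon(t,x)-\mathbb{M}_\varepsilon(t-,x)$, $\langle\cdot,\cdot\rangle$ the predictable quadratic covariation, all constants non-random and independent of $\varepsilon,s,t,x$, such that: (A1) $\langle \mathbb{M}_\varepsilon(x),\mathbb{M}_\varepsilon(y)\rangle_t=0$ for $x\neq y$, and $\langle\mathbb{M}_\varepsilon(x)\rangle_t=\varepsilon^{-d}\int_0^t\mathcal{C}_\varepsilon(s,x)\,ds$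 with $\mathcal{C}_\varepsilon$ progressively measurable, $|\mathcal{C}_\varepsilon|\le C$ a.s.; (A2) for every $T>0$, a.s. $\Delta_t\mathbb{M}_\varepsilon(x)\Delta_t\mathbb{M}_\varepsilon(y)=0$ for all $x\ne y$, $t\in[0,T]$; (A3) there exist $\mathbf{k}>-d/2$ and $c>0$ with a.s. $|\Delta_t\mathbb{M}_\varepsilon(x)|=c\varepsilon^{\mathbf{k}}$ whenever $\Delta_t\mathbb{M}_\varepsilon(x)\ne0$; (A4) $\mathbb{M}_\varepsilon(t,x)=\sum_{0\le s\le t}\Delta_s\mathbb{M}_\varepsilon(x)-\varepsilon^{-\mathbf{k}-d}\int_0^t\mathtt{C}_\varepsilon(s,x)\,ds$ with $\mathtt{C}_\varepsilon$ progressively measurable, $|\mathtt{C}_\varepsilon|\le C$ a.s. By (A4) the paths are a.s. of locally bounded variation, and $\mathbf{M}_\varepsilon$ denotes the random (signed) measure on $\mathcal{D}_\varepsilon$ given by $\int_{\mathcal{D}_\varepsilon}F\,d\mathbf{M}_\varepsilon=\sum_{x\in\Lambda_\varepsilon}\varepsilon^d\int_0^\infty F(s,x)\,d\mathbb{M}_\varepsilon(s,x)$ (Lebesgue–Stieltjes integral). *)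

theory Defs
  imports "HOL-Probability.Probability"
begin

text \<open>Lattice: eps = 1/N with N a positive natural number; a point of
  (eps Z / Z)^d is encoded by the list of its integer coordinates a_i in {0..N-1}
  (the point being (eps a_1, ..., eps a_d)).\<close>
definition Lam :: "nat \<Rightarrow> nat \<Rightarrow> nat list set" where
  "Lam N d = {xs. length xs = d \<and> (\<forall>a\<in>set xs. a < N)}"

definition Dset :: "nat \<Rightarrow> nat \<Rightarrow> (real \<times> nat list) set" where
  "Dset N d = {0..} \<times> Lam N d"

text \<open>Jump of a pth at time t, with the convention f(0-) = f(0).\<close>
definition jump :: "(real \<Rightarrow> real) \<Rightarrow> real \<Rightarrow> real" where
  "jump f t = (if t \<le> 0 then 0 else f t - Lim (at_left t) f)"

definition cadlag_on_nonneg :: "(real \<Rightarrow> real) \<Rightarrow> bool" where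
  "cadlag_on_nonneg f \<longleftrightarrow>
     (\<forall>t\<ge>0. continuous (at_right t) f) \<and> (\<forall>t>0. \<exists>l. (f \<longlongrightarrow> l) (at_left t))"

definition usual_filtration :: "'a measure \<Rightarrow> (real \<Rightarrow> 'a measure) \<Rightarrow> bool" where
  "usual_filtration P F \<longleftrightarrow>
     filtration (space P) F \<and> (\<forall>t. sets (F t) \<subseteq> sets P) \<and>
     (\<forall>t\<ge>0. sets (F t) = (\<Inter>u\<in>{t<..}. sets (F u))) \<and>
     (\<forall>A. A \<subseteq> space P \<and> (\<exists>B\<in>null_sets P. A \<subseteq> B) \<longrightarrow> A \<in> sets (F 0))"

definition martingale :: "'a measure \<Rightarrow> (real \<Rightarrow> 'a measure) \<Rightarrow> (real \<Rightarrow> 'a \<Rightarrow> real) \<Rightarrow> bool" where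
  "martingale P F X \<longleftrightarrow>
     (\<forall>t\<ge>0. X t \<in> borel_measurable (F t)) \<and> (\<forall>t\<ge>0. integrable P (X t)) \<and>
     (\<forall>s t. 0 \<le> s \<longrightarrow> s \<le> t \<longrightarrow> (AE \<omega> in P. real_cond_exp P (F s) (X t) \<omega> = X s \<omega>))"

definition cadlag_sq_int_martingale :: "'a measure \<Rightarrow> (real \<Rightarrow> 'a measure) \<Rightarrow> (real \<Rightarrow> 'a \<Rightarrow> real) \<Rightarrow> bool" where
  "cadlag_sq_int_martingale P F X \<longleftrightarrow>
     martingale P F X \<and> (\<forall>t\<ge>0. integrable P (\<lambda>\<omega>. (X t \<omega>)\<^sup>2)) \<and>
     (AE \<omega> in P. cadlag_on_nonneg (\<lambda>t. X t \<omega>))"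

definition progressive :: "(real \<Rightarrow> 'a measure) \<Rightarrow> (real \<Rightarrow> 'a \<Rightarrow> real) \<Rightarrow> bool" where
  "progressive F X \<longleftrightarrow>
     (\<forall>t\<ge>0. (\<lambda>(s, \<omega>). X s \<omega>) \<in> borel_measurable (restrict_space borel {0..t} \<Otimes>\<^sub>M F t))"

definition total_variation :: "(real \<Rightarrow> real) \<Rightarrow> real \<Rightarrow> real \<Rightarrow> real" where
  "total_variation f a b = Sup {(\<Sum>i<m. \<bar>f (p (Suc i)) - f (p i)\<bar>) | m p.
       p 0 = a \<and> p m = b \<and> (\<forall>i<m. p i \<le> p (Suc i))}"

text \<open>Total variation measure |df| on the real line of a (cadlag, locally BV) pth
  f on [0,oo) (no atom at 0, consistent with f(0-) = f(0)).\<close>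
definition tv_measure :: "(real \<Rightarrow> real) \<Rightarrow> real measure" where
  "tv_measure f = interval_measure (\<lambda>t. if t \<le> 0 then 0 else total_variation f 0 t)"

text \<open>Total variation measure |M_eps| of the random measure M_eps on D_eps for a fixed
  realisation; pth x t = M_eps(t,x)(omega).\<close>
definition Dmeas :: "nat \<Rightarrow> nat \<Rightarrow> (nat list \<Rightarrow> real \<Rightarrow> real) \<Rightarrow> (real \<times> nat list) measure" where
  "Dmeas N d pth = measure_of (Dset N d)
     (sets (restrict_space (borel \<Otimes>\<^sub>M count_space UNIV) (Dset N d)))
     (\<lambda>A. \<Sum>x\<in>Lam N d. ennreal ((1 / real N) ^ d) * emeasure (tv_measure (pth x)) {s. (s, x) \<in> A})"

text \<open>The set C (indices 0..n-1 instead of 1..n).\<close>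
definition Cset :: "nat \<Rightarrow> nat \<Rightarrow> nat \<Rightarrow> (nat \<Rightarrow> real \<times> nat list) set" where
  "Cset N d n = {z \<in> ({..<n} \<rightarrow>\<^sub>E Dset N d). \<exists>T::nat. \<exists>i<n. \<exists>j<n. i \<noteq> j \<and>
       fst (z i) = fst (z j) \<and> fst (z i) \<in> {0..<real T} \<and> snd (z i) \<noteq> snd (z j)}"

end

theory Submission
  imports Defs
begin


definition psum :: "(real \<Rightarrow> real) \<Rightarrow> (nat \<Rightarrow> real) \<Rightarrow> nat \<Rightarrow> real" where
  "psum f p m = (\<Sum>i<m. \<bar>f (p (Suc i)) - f (p i)\<bar>)"

definition part :: "real \<Rightarrow> real \<Rightarrow> (nat \<Rightarrow> real) \<Rightarrow> nat \<Rightarrow> bool" where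
  "part a b p m \<longleftrightarrow> p 0 = a \<and> p m = b \<and> (\<forall>i<m. p i \<le> p (Suc i))"

lemma part_range:
  assumes "part a b p m" "i \<le> m" shows "a \<le> p i \<and> p i \<le> b"
proof -
  define q where "q i = p (min i m)" for i
  have "q i \<le> q (Suc i)" for i using assms(1) unfolding part_def q_def
    by (cases "i < m") (auto simp: min_def)
  hence mono: "i \<le> j \<Longrightarrow> q i \<le> q j" for i j by (rule lift_Suc_mono_le)
  have "q 0 \<le> q i" "q i \<le> q m" using mono assms by auto
  thus ?thesis using assms unfolding part_def q_def by (auto simp: min_def)
qed

lemma psum_H:
  assumes HB: "\<And>r r'. a \<le> r' \<Longrightarrow> r' \<le> r \<Longrightarrow> r \<le> b \<Longrightarrow> \<bar>f r - f r'\<bar> \<le> H r - H r'"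
    and P: "part a b p m"
  shows "psum f p m \<le> H b - H a"
proof -
  have "psum f p m \<le> (\<Sum>i<m. H (p (Suc i)) - H (p i))"
    unfolding psum_def
  proof (rule sum_mono)
    fix i assume "i \<in> {..<m}"
    hence "i < m" by simp
    then show "\<bar>f (p (Suc i)) - f (p i)\<bar> \<le> H (p (Suc i)) - H (p i)"
      using part_range[OF P, of i] part_range[OF P, of "Suc i"] P unfolding part_def
      by (intro HB) auto
  qed
  also have "\<dots> = H (p m) - H (p 0)" by (rule sum_lessThan_telescope)
  finally show ?thesis using P unfolding part_def by simp
qed

lemma psum_upd: "psum f (p(Suc m := b)) m = psum f p m"
  unfolding psum_def by (intro sum.cong) auto

lemma psum_Suc_upd: "psum f (p(Suc m := b)) (Suc m) = psum f p m + \<bar>f b - f (p m)\<bar>"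
  using psum_upd[of f p m b] by (simp add: psum_def)

lemma psum_split:
  assumes "part u b p m" "u \<le> a" "a \<le> b"
  shows "\<exists>p1 m1 p2 m2. part u a p1 m1 \<and> part a b p2 m2 \<and> psum f p m \<le> psum f p1 m1 + psum f p2 m2"
  using assms
proof (induction m arbitrary: b)
  case 0
  hence "u = a" "a = b" unfolding part_def by auto
  then show ?case
    by (intro exI[of _ "\<lambda>_. a"] exI[of _ 0]) (auto simp: part_def psum_def)
next
  case (Suc m)
  have pm: "p m \<le> b" "u \<le> p m" using part_range[OF Suc.prems(1), of m] by auto
  have P': "part u (p m) p m" using Suc.prems(1) unfolding part_def by auto
  have ps: "psum f p (Suc m) = psum f p m + \<bar>f b - f (p m)\<bar>"
    using Suc.prems(1) unfolding psum_def part_def by simp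
  show ?case
  proof (cases "p m \<le> a")
    case True
    define p1 where "p1 = p(Suc m := a)"
    have "part u a p1 (Suc m)" using Suc.prems(1) True unfolding part_def p1_def by auto
    moreover have "part a b (\<lambda>i. if i = 0 then a else b) 1" using Suc.prems unfolding part_def by auto
    moreover have "psum f p1 (Suc m) = psum f p m + \<bar>f a - f (p m)\<bar>"
      unfolding p1_def by (rule psum_Suc_upd)
    moreover have "psum f (\<lambda>i. if i = 0 then a else b) 1 = \<bar>f b - f a\<bar>" by (simp add: psum_def)
    ultimately show ?thesis using ps
      by (intro exI[of _ p1] exI[of _ "Suc m"] exI[of _ "\<lambda>i. if i = 0 then a else b"] exI[of _ 1]) auto
  next
    case False
    from Suc.IH[OF P' Suc.prems(2)] False obtain p1 m1 p2 m2 where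
      A: "part u a p1 m1" "part a (p m) p2 m2" "psum f p m \<le> psum f p1 m1 + psum f p2 m2" by auto
    define p3 where "p3 = p2(Suc m2 := b)"
    have "part a b p3 (Suc m2)" using A(2) pm unfolding part_def p3_def by auto
    moreover have "psum f p3 (Suc m2) = psum f p2 m2 + \<bar>f b - f (p m)\<bar>"
      using A(2) psum_Suc_upd[of f p2 m2 b] unfolding p3_def part_def by simp
    ultimately show ?thesis using A ps by (intro exI[of _ p1] exI[of _ m1] exI[of _ p3] exI[of _ "Suc m2"]) auto
  qed
qed

lemma psum_extend:
  assumes "part u a p m" "a \<le> b"
  shows "part u b (p(Suc m := b)) (Suc m) \<and> psum f p m \<le> psum f (p(Suc m := b)) (Suc m)"
proof -
  have "psum f (p(Suc m := b)) (Suc m) = psum f p m + \<bar>f b - f a\<bar>"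
    using assms psum_Suc_upd[of f p m b] unfolding part_def by simp
  thus ?thesis using assms unfolding part_def by auto
qed

definition TVset :: "(real \<Rightarrow> real) \<Rightarrow> real \<Rightarrow> real set" where
  "TVset f b = {psum f p m | m p. part 0 b p m}"

lemma TV_eq: "total_variation f 0 b = Sup (TVset f b)"
  unfolding total_variation_def TVset_def psum_def part_def by simp

definition FF0 :: "(real \<Rightarrow> real) \<Rightarrow> real \<Rightarrow> real" where
  "FF0 f t = (if t \<le> 0 then 0 else total_variation f 0 t)"

lemma tv_measure_FF0: "tv_measure f = interval_measure (FF0 f)"
  unfolding tv_measure_def FF0_def by simp

locale HBloc =
  fixes f H :: "real \<Rightarrow> real"
  assumes HB: "\<And>r r'. 0 \<le> r' \<Longrightarrow> r' \<le> r \<Longrightarrow> \<bar>f r - f r'\<bar> \<le> H r - H r'"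
begin

lemma bdd: "bdd_above (TVset f b)"
proof (cases "b \<ge> 0")
  case True
  show ?thesis unfolding TVset_def
    by (rule bdd_aboveI[of _ "H b - H 0"]) (auto intro!: psum_H[where H=H] HB)
next
  case False
  have "TVset f b = {}"
  proof (rule equals0I)
    fix y assume "y \<in> TVset f b"
    then obtain p m where "part 0 b p m" unfolding TVset_def by auto
    from part_range[OF this, of m] False show False by simp
  qed
  thus ?thesis by simp
qed

lemma mem1: "b \<ge> 0 \<Longrightarrow> psum f (\<lambda>i. if i = 0 then 0 else b) 1 \<in> TVset f b"
  unfolding TVset_def part_def
  by (rule CollectI, rule exI[of _ 1], rule exI[of _ "\<lambda>i. if i = 0 then 0 else b"]) simp

lemma ne: "b \<ge> 0 \<Longrightarrow> TVset f b \<noteq> {}"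
  using mem1 by blast

lemma tv_upper: "part 0 b p m \<Longrightarrow> psum f p m \<le> total_variation f 0 b"
  unfolding TV_eq by (rule cSup_upper[OF _ bdd]) (auto simp: TVset_def)

lemma tv_nonneg: "b \<ge> 0 \<Longrightarrow> 0 \<le> total_variation f 0 b"
  using tv_upper[of b "\<lambda>i. if i = 0 then 0 else b" 1] by (auto simp: part_def psum_def)

lemma tv_mono: 
  assumes "0 \<le> a" "a \<le> b" shows "total_variation f 0 a \<le> total_variation f 0 b"
  unfolding TV_eq[of f a]
proof (rule cSup_least[OF ne[OF assms(1)]])
  fix y assume "y \<in> TVset f a"
  then obtain p m where y: "y = psum f p m" "part 0 a p m" unfolding TVset_def by auto
  from psum_extend[OF y(2) assms(2), of f] have
    "part 0 b (p(Suc m := b)) (Suc m)" "psum f p m \<le> psum f (p(Suc m := b)) (Suc m)" by auto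
  with tv_upper[OF this(1)] y show "y \<le> total_variation f 0 b" by simp
qed

lemma tv_split:
  assumes "0 \<le> a" "a \<le> b" and HB2: "\<And>r r'. a \<le> r' \<Longrightarrow> r' \<le> r \<Longrightarrow> r \<le> b \<Longrightarrow> \<bar>f r - f r'\<bar> \<le> H2 r - H2 r'"
  shows "total_variation f 0 b \<le> total_variation f 0 a + (H2 b - H2 a)"
  unfolding TV_eq[of f b]
proof (rule cSup_least[OF ne])
  show "0 \<le> b" using assms by simp
  fix y assume "y \<in> TVset f b"
  then obtain p m where y: "y = psum f p m" "part 0 b p m" unfolding TVset_def by auto
  from psum_split[OF y(2) assms(1,2), of f] obtain p1 m1 p2 m2 where
    A: "part 0 a p1 m1" "part a b p2 m2" "psum f p m \<le> psum f p1 m1 + psum f p2 m2" by auto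
  have "psum f p1 m1 \<le> total_variation f 0 a" by (rule tv_upper[OF A(1)])
  moreover have "psum f p2 m2 \<le> H2 b - H2 a" by (rule psum_H[OF HB2 A(2)])
  ultimately show "y \<le> total_variation f 0 a + (H2 b - H2 a)" using A(3) y by simp
qed

lemma tv0: "total_variation f 0 0 \<le> 0"
  unfolding TV_eq
proof (rule cSup_least[OF ne])
  fix y assume "y \<in> TVset f 0"
  then obtain p m where y: "y = psum f p m" "part 0 0 p m" unfolding TVset_def by auto
  have "psum f p m \<le> (\<lambda>_. 0) 0 - (\<lambda>_. 0) 0"
    by (rule psum_H[where H="\<lambda>_. 0", OF _ y(2)]) (subgoal_tac "r = r'", auto)
  thus "y \<le> 0" using y by simp
qed simp

lemma FF_mono: "x \<le> y \<Longrightarrow> FF0 f x \<le> FF0 f y"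
  unfolding FF0_def using tv_mono tv_nonneg by auto

lemma FF_diff:
  assumes "0 \<le> a" "a \<le> b" and HB2: "\<And>r r'. a \<le> r' \<Longrightarrow> r' \<le> r \<Longrightarrow> r \<le> b \<Longrightarrow> \<bar>f r - f r'\<bar> \<le> H2 r - H2 r'"
  shows "FF0 f b - FF0 f a \<le> H2 b - H2 a"
  using tv_split[OF assms] tv0 assms(1,2) unfolding FF0_def
  by (cases "a = 0"; cases "b = 0") auto

end



lemma jump_le0: "t \<le> 0 \<Longrightarrow> jump f t = 0" by (simp add: jump_def)

lemma jump_small:
  assumes "s > 0" "(f \<longlongrightarrow> l) (at_left s)" "a < s"
    and "\<And>r. a < r \<Longrightarrow> r < s \<Longrightarrow> \<bar>f r - v\<bar> \<le> e" "\<bar>f s - v\<bar> \<le> e'"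
  shows "\<bar>jump f s\<bar> \<le> e + e'"
proof -
  have L: "Lim (at_left s) f = l" using assms(2) by (intro tendsto_Lim) auto
  have "eventually (\<lambda>r. r \<in> {a<..<s}) (at_left s)" using assms(3) by (rule eventually_at_left_real)
  hence ev: "eventually (\<lambda>r. \<bar>f r - v\<bar> \<le> e) (at_left s)" by eventually_elim (use assms(4) in auto)
  have "((\<lambda>r. \<bar>f r - v\<bar>) \<longlongrightarrow> \<bar>l - v\<bar>) (at_left s)" by (intro tendsto_intros assms(2))
  hence "\<bar>l - v\<bar> \<le> e" by (rule tendsto_upperbound[OF _ ev]) auto
  thus ?thesis using assms(1,5) L unfolding jump_def by auto
qed

lemma cadlag_isolated:
  assumes C: "cadlag_on_nonneg f" and d: "d > 0"
    and J: "\<And>t. jump f t \<noteq> 0 \<Longrightarrow> d \<le> \<bar>jump f t\<bar>" and t: "t \<ge> 0"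
  shows "\<exists>e>0. \<forall>s. \<bar>s - t\<bar> < e \<longrightarrow> s \<noteq> t \<longrightarrow> jump f s = 0"
proof -
  have d3: "d/3 > 0" using d by simp
  have rc: "(f \<longlongrightarrow> f t) (at_right t)" using C t unfolding cadlag_on_nonneg_def continuous_within by auto
  have "eventually (\<lambda>s. dist (f s) (f t) < d/3) (at_right t)" using tendsto_iff[THEN iffD1, OF rc] d3 by blast
  then obtain b where b: "b > t" "\<And>s. s > t \<Longrightarrow> s < b \<Longrightarrow> dist (f s) (f t) < d/3"
    using eventually_at_right[of t "t+1"] by auto
  have right: "jump f s = 0" if s: "t < s" "s < b" for s
  proof -
    have "s > 0" using s t by linarith
    then obtain l where l: "(f \<longlongrightarrow> l) (at_left s)" using C unfolding cadlag_on_nonneg_def by auto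
    have "\<bar>jump f s\<bar> \<le> d/3 + d/3"
      by (rule jump_small[OF _ l s(1), of "f t"]) (use s t b in \<open>auto simp: dist_real_def less_imp_le\<close>)
    thus ?thesis using J[of s] d by force
  qed
  show ?thesis
  proof (cases "t = 0")
    case True
    show ?thesis using right jump_le0 b True
      by (intro exI[of _ "b - t"]) (auto, metis abs_of_pos linorder_not_le)
  next
    case False
    hence tp: "t > 0" using t by simp
    obtain l where l: "(f \<longlongrightarrow> l) (at_left t)" using C tp unfolding cadlag_on_nonneg_def by auto
    have "eventually (\<lambda>s. dist (f s) l < d/3) (at_left t)" using tendsto_iff[THEN iffD1, OF l] d3 by blast
    then obtain a where a: "a < t" "\<And>s. s > a \<Longrightarrow> s < t \<Longrightarrow> dist (f s) l < d/3"
      using eventually_at_left[of "t-1" t] by auto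
    define a' where "a' = max a 0"
    have left: "jump f s = 0" if s: "a' < s" "s < t" for s
    proof -
      have sp: "s > 0" using s a'_def by auto
      obtain l' where l': "(f \<longlongrightarrow> l') (at_left s)" using C sp unfolding cadlag_on_nonneg_def by auto
      have "\<bar>jump f s\<bar> \<le> d/3 + d/3"
        by (rule jump_small[OF sp l', of a' l]) (use s a a'_def in \<open>auto simp: dist_real_def less_imp_le\<close>)
      thus ?thesis using J[of s] d by force
    qed
    have "a' < t" using a tp a'_def by auto
    show ?thesis
      apply (intro exI[of _ "min (b - t) (t - a')"])
      using left right b \<open>a' < t\<close> by (auto simp: abs_if split: if_splits)
  qed
qed

lemma cadlag_jumps_finite:
  assumes C: "cadlag_on_nonneg f" and d: "d > 0"
    and J: "\<And>t. jump f t \<noteq> 0 \<Longrightarrow> d \<le> \<bar>jump f t\<bar>"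
  shows "finite ({t. jump f t \<noteq> 0} \<inter> {..T})"
proof -
  have "\<forall>t\<in>{0..T}. \<exists>e>0. \<forall>s. \<bar>s - t\<bar> < e \<longrightarrow> s \<noteq> t \<longrightarrow> jump f s = 0"
    using cadlag_isolated[OF C d J] by auto
  then obtain e where e: "\<And>t. t \<in> {0..T} \<Longrightarrow> e t > 0 \<and> (\<forall>s. \<bar>s - t\<bar> < e t \<longrightarrow> s \<noteq> t \<longrightarrow> jump f s = 0)"
    by metis
  have "{0..T} \<subseteq> (\<Union>t\<in>{0..T}. ball t (e t))" using e by force
  then obtain D where D: "D \<subseteq> {0..T}" "finite D" "{0..T} \<subseteq> (\<Union>t\<in>D. ball t (e t))"
    using compactE_image[OF compact_Icc[of 0 T], of "{0..T}" "\<lambda>t. ball t (e t)"] by auto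
  have "{t. jump f t \<noteq> 0} \<inter> {..T} \<subseteq> D"
  proof
    fix s assume s: "s \<in> {t. jump f t \<noteq> 0} \<inter> {..T}"
    hence "s > 0" using jump_le0[of s f] by force
    with s D(3) have "s \<in> (\<Union>t\<in>D. ball t (e t))" by (meson IntD2 atLeastAtMost_iff atMost_iff less_imp_le subsetD)
    then obtain t where t: "t \<in> D" "s \<in> ball t (e t)" by auto
    hence "\<bar>s - t\<bar> < e t" by (simp add: dist_real_def abs_minus_commute)
    with e[of t] t D s show "s \<in> D" by (cases "s = t") auto
  qed
  thus ?thesis using D(2) finite_subset by blast
qed



lemma no_jump_bound:
  fixes x K h0 :: real
  assumes "\<And>m. 0 < m \<Longrightarrow> m < h0 \<Longrightarrow> x \<le> K * m" "h0 > 0" "K \<ge> 0"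
  shows "x \<le> 0"
proof (rule ccontr)
  assume "\<not> x \<le> 0"
  define m where "m = min (h0/2) (x / (2*(K+1)))"
  have "m > 0" "m < h0" using \<open>\<not> x \<le> 0\<close> assms(2,3) by (auto simp: m_def)
  hence "x \<le> K * m" using assms(1) by auto
  also have "K * m \<le> K * (x / (2*(K+1)))" using assms(3) by (intro mult_left_mono) (auto simp: m_def)
  also have "\<dots> < x" using \<open>\<not> x \<le> 0\<close> assms(3) by (simp add: field_simps) (smt (verit) mult_nonneg_nonneg)
  finally show False by simp
qed

lemma tv_struct:
  fixes f L :: "real \<Rightarrow> real" and K :: real
  assumes fin: "\<And>T. finite ({t. jump f t \<noteq> 0} \<inter> {..T})"
    and repr: "\<And>t. t \<ge> 0 \<Longrightarrow> f t = (\<Sum>s\<in>{t. jump f t \<noteq> 0} \<inter> {0..t}. jump f s) - L t"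
    and Lip: "\<And>r r'. 0 \<le> r' \<Longrightarrow> r' \<le> r \<Longrightarrow> \<bar>L r - L r'\<bar> \<le> K * (r - r')"
  shows "\<And>x y. x \<le> y \<Longrightarrow> FF0 f x \<le> FF0 f y"
    and "\<And>a. continuous (at_right a) (FF0 f)"
    and "\<And>t. jump f t = 0 \<Longrightarrow> emeasure (tv_measure f) {t} = 0"
    and "\<And>a b. emeasure (tv_measure f) {a<..b} < \<infinity>"
proof -
  define J where "J = {t. jump f t \<noteq> 0}"
  have K0: "K \<ge> 0" using Lip[of 0 1] by simp
  have finJ: "finite (J \<inter> A)" if "A \<subseteq> {..T}" for A T
    using fin[of T] that unfolding J_def by (metis finite_Int inf.absorb_iff2 inf_assoc)
  have fsplit: "finite (J \<inter> {0..r'})" "finite (J \<inter> {r'<..r})" "(J \<inter> {0..r'}) \<inter> (J \<inter> {r'<..r}) = {}" for r r'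
    by (rule finJ[of _ r'], force, rule finJ[of _ r], force, force)
  have dec: "f r - f r' = (\<Sum>s\<in>J \<inter> {r'<..r}. jump f s) - (L r - L r')" if "0 \<le> r'" "r' \<le> r" for r r'
  proof -
    have "J \<inter> {0..r} = (J \<inter> {0..r'}) \<union> (J \<inter> {r'<..r})" using that by auto
    hence "(\<Sum>s\<in>J \<inter> {0..r}. jump f s) = (\<Sum>s\<in>J \<inter> {0..r'}. jump f s) + (\<Sum>s\<in>J \<inter> {r'<..r}. jump f s)"
      by (simp add: sum.union_disjoint[OF fsplit])
    thus ?thesis using repr[of r] repr[of r'] that unfolding J_def by simp
  qed
  define G where "G t = (\<Sum>s\<in>J \<inter> {0..t}. \<bar>jump f s\<bar>)" for t
  have Gdec: "G r - G r' = (\<Sum>s\<in>J \<inter> {r'<..r}. \<bar>jump f s\<bar>)" if "0 \<le> r'" "r' \<le> r" for r r'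
  proof -
    have "J \<inter> {0..r} = (J \<inter> {0..r'}) \<union> (J \<inter> {r'<..r})" using that by auto
    hence "G r = G r' + (\<Sum>s\<in>J \<inter> {r'<..r}. \<bar>jump f s\<bar>)"
      unfolding G_def by (simp add: sum.union_disjoint[OF fsplit])
    thus ?thesis by simp
  qed
  have gen: "\<bar>f r - f r'\<bar> \<le> (\<Sum>s\<in>J \<inter> {r'<..r}. \<bar>jump f s\<bar>) + K * (r - r')" if "0 \<le> r'" "r' \<le> r" for r r'
  proof -
    have "\<bar>f r - f r'\<bar> \<le> \<bar>\<Sum>s\<in>J \<inter> {r'<..r}. jump f s\<bar> + \<bar>L r - L r'\<bar>" using dec[OF that] by linarith
    also have "\<dots> \<le> (\<Sum>s\<in>J \<inter> {r'<..r}. \<bar>jump f s\<bar>) + K * (r - r')"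
      by (intro add_mono sum_abs Lip that)
    finally show ?thesis .
  qed
  interpret HBloc f "\<lambda>t. G t + K * t"
  proof
    fix r r' :: real assume "0 \<le> r'" "r' \<le> r"
    from gen[OF this] Gdec[OF this]
    show "\<bar>f r - f r'\<bar> \<le> G r + K * r - (G r' + K * r')" by (simp add: algebra_simps)
  qed
  have loc: "\<bar>f r - f r'\<bar> \<le> K * r - K * r'" if "J \<inter> {a<..b} = {}" "0 \<le> a" "a \<le> r'" "r' \<le> r" "r \<le> b" for a b r r'
  proof -
    have "J \<inter> {r'<..r} = {}" using that by auto
    thus ?thesis using gen[of r' r] that by (simp add: algebra_simps)
  qed
  have iso: "\<exists>e>0. \<forall>s\<in>J. \<bar>s - t\<bar> < e \<longrightarrow> s = t" for t
  proof -
    obtain d where d: "d > 0" "\<forall>x\<in>J \<inter> {..t+1}. x \<noteq> t \<longrightarrow> d \<le> dist t x"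
      using finite_set_avoid[OF finJ[of "{..t+1}" "t+1"]] by auto
    show ?thesis
      by (rule exI[of _ "min d 1"]) (use d in \<open>auto simp: dist_real_def abs_minus_commute abs_less_iff\<close>)
  qed
  show mono: "\<And>x y. x \<le> y \<Longrightarrow> FF0 f x \<le> FF0 f y" by (rule FF_mono)
  have rc0: "\<forall>\<epsilon>>0. \<exists>\<delta>>0. FF0 f (a + \<delta>) - FF0 f a < \<epsilon>" for a
  proof (intro allI impI)
    fix \<epsilon> :: real assume \<epsilon>: "\<epsilon> > 0"
    show "\<exists>\<delta>>0. FF0 f (a + \<delta>) - FF0 f a < \<epsilon>"
    proof (cases "a < 0")
      case True
      thus ?thesis using \<epsilon> by (intro exI[of _ "-a/2"]) (auto simp: FF0_def)
    next
      case False
      obtain e where e: "e > 0" "\<forall>s\<in>J. \<bar>s - a\<bar> < e \<longrightarrow> s = a" using iso by auto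
      define \<delta> where "\<delta> = min (e/2) (\<epsilon> / (2*(K+1)))"
      have \<delta>: "\<delta> > 0" "\<delta> < e" using e \<epsilon> K0 by (auto simp: \<delta>_def)
      have "J \<inter> {a<..a+\<delta>} = {}" using e \<delta> by force
      hence "FF0 f (a + \<delta>) - FF0 f a \<le> K * (a + \<delta>) - K * a"
        using False \<delta> by (intro FF_diff loc) auto
      also have "\<dots> = K * \<delta>" by (simp add: algebra_simps)
      also have "\<dots> \<le> K * (\<epsilon> / (2*(K+1)))" using K0 by (intro mult_left_mono) (auto simp: \<delta>_def)
      also have "\<dots> < \<epsilon>" using \<epsilon> K0 by (simp add: field_simps) (smt (verit) mult_nonneg_nonneg)
      finally show ?thesis using \<delta> by auto
    qed
  qed
  have rc: "continuous (at_right a) (FF0 f)" for a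
    using continuous_at_right_real_increasing[of "FF0 f" a] FF_mono rc0[of a] by blast
  show "continuous (at_right a) (FF0 f)" for a by (rule rc)
  have Ioc: "emeasure (tv_measure f) {a<..b} = ennreal (FF0 f b - FF0 f a)" if "a \<le> b" for a b
    unfolding tv_measure_FF0 using that by (intro emeasure_interval_measure_Ioc mono rc)
  show "emeasure (tv_measure f) {a<..b} < \<infinity>" for a b
    by (cases "a \<le> b") (auto simp: Ioc)
  show "emeasure (tv_measure f) {t} = 0" if jt: "jump f t = 0" for t
  proof -
    have sub: "emeasure (tv_measure f) {t} \<le> ennreal (FF0 f t - FF0 f (t - h))" if "h > 0" for h
    proof -
      have "emeasure (tv_measure f) {t} \<le> emeasure (tv_measure f) {t-h<..t}"
        using that by (intro emeasure_mono) (auto simp: tv_measure_FF0)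
      thus ?thesis using Ioc[of "t - h" t] that by simp
    qed
    show ?thesis
    proof (cases "t \<le> 0")
      case True
      thus ?thesis using sub[of 1] by (simp add: FF0_def)
    next
      case False
      obtain e where e: "e > 0" "\<forall>s\<in>J. \<bar>s - t\<bar> < e \<longrightarrow> s = t" using iso by auto
      have tJ: "t \<notin> J" using jt unfolding J_def by simp
      have bnd: "FF0 f t - FF0 f (t - h) \<le> K * h" if "0 < h" "h < min e t" for h
      proof -
        have "J \<inter> {t-h<..t} = {}" using e tJ that by force
        hence "FF0 f t - FF0 f (t - h) \<le> K * t - K * (t - h)"
          using that by (intro FF_diff loc) auto
        thus ?thesis by (simp add: algebra_simps)
      qed
      define x where "x = enn2real (emeasure (tv_measure f) {t})"
      have fin1: "emeasure (tv_measure f) {t} \<noteq> \<top>"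
        using sub[of 1] by (metis ennreal_neq_top neq_top_trans zero_less_one)
      have "x \<le> K * h" if "0 < h" "h < min e t" for h
      proof -
        have D0: "0 \<le> FF0 f t - FF0 f (t - h)" using mono[of "t-h" t] that by simp
        have "x \<le> enn2real (ennreal (FF0 f t - FF0 f (t - h)))"
          unfolding x_def using sub[of h] that by (intro enn2real_mono) auto
        hence "x \<le> FF0 f t - FF0 f (t - h)" using D0 by simp
        thus ?thesis using bnd[OF that] by simp
      qed
      hence "x \<le> 0" using e False K0 by (intro no_jump_bound[of "min e t" x K]) auto
      moreover have "0 \<le> x" unfolding x_def by simp
      ultimately have "x = 0" by simp
      thus ?thesis using fin1 unfolding x_def by (simp add: enn2real_eq_0_iff)
    qed
  qed
qed



definition RR :: "nat \<Rightarrow> nat \<Rightarrow> (real \<times> nat list) measure" where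
  "RR N d = restrict_space (borel \<Otimes>\<^sub>M count_space UNIV) (Dset N d)"

definition mufun :: "nat \<Rightarrow> nat \<Rightarrow> (nat list \<Rightarrow> real \<Rightarrow> real) \<Rightarrow> (real \<times> nat list) set \<Rightarrow> ennreal" where
  "mufun N d pth A = (\<Sum>x\<in>Lam N d. ennreal ((1 / real N) ^ d) * emeasure (tv_measure (pth x)) {s. (s, x) \<in> A})"

lemma space_RR: "space (RR N d) = Dset N d"
  unfolding RR_def by (simp add: space_restrict_space space_pair_measure)

lemma Dmeas_eq: "Dmeas N d pth = measure_of (space (RR N d)) (sets (RR N d)) (mufun N d pth)"
  unfolding Dmeas_def mufun_def using space_RR[of N d] unfolding RR_def by simp

lemma sets_Dmeas: "sets (Dmeas N d pth) = sets (RR N d)"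
  unfolding Dmeas_eq by (rule sets.sets_measure_of_eq)

lemma space_Dmeas: "space (Dmeas N d pth) = Dset N d"
  unfolding Dmeas_eq by (simp add: space_RR[symmetric] space_measure_of_conv)

lemma Dset_sets: "Dset N d \<in> sets (borel \<Otimes>\<^sub>M count_space UNIV)"
  unfolding Dset_def by (intro pair_measureI) auto

lemma sets_RR_iff: "A \<in> sets (RR N d) \<longleftrightarrow> A \<subseteq> Dset N d \<and> A \<in> sets (borel \<Otimes>\<^sub>M count_space UNIV)"
  unfolding RR_def using Dset_sets by (subst sets_restrict_space_iff) (auto simp: space_pair_measure)

lemma section_borel:
  assumes "A \<in> sets (RR N d)" shows "{s. (s, x) \<in> A} \<in> sets borel"
proof -
  have "A \<in> sets (borel \<Otimes>\<^sub>M count_space UNIV)" using assms sets_RR_iff by blast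
  from sets_Pair2[OF this, of x] show ?thesis by (simp add: vimage_def)
qed

lemma tv_sets[simp]: "sets (tv_measure f) = sets borel"
  unfolding tv_measure_def by simp

lemma mufun_ca: "countably_additive (sets (RR N d)) (mufun N d pth)"
  unfolding countably_additive_def
proof (intro allI impI)
  fix A :: "nat \<Rightarrow> (real \<times> nat list) set"
  assume A: "range A \<subseteq> sets (RR N d)" "disjoint_family A" "\<Union> (range A) \<in> sets (RR N d)"
  let ?c = "ennreal ((1 / real N) ^ d)"
  have "(\<Sum>i. mufun N d pth (A i)) = (\<Sum>x\<in>Lam N d. \<Sum>i. ?c * emeasure (tv_measure (pth x)) {s. (s, x) \<in> A i})"
    unfolding mufun_def by (rule suminf_sum) simp
  also have "\<dots> = (\<Sum>x\<in>Lam N d. ?c * (\<Sum>i. emeasure (tv_measure (pth x)) {s. (s, x) \<in> A i}))"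
    by (simp add: ennreal_suminf_cmult)
  also have "\<dots> = mufun N d pth (\<Union> (range A))"
    unfolding mufun_def
  proof (intro sum.cong refl arg_cong2[where f="(*)"])
    fix x
    have "(\<Sum>i. emeasure (tv_measure (pth x)) {s. (s, x) \<in> A i}) =
          emeasure (tv_measure (pth x)) (\<Union>i. {s. (s, x) \<in> A i})"
    proof (rule suminf_emeasure)
      show "range (\<lambda>i. {s. (s, x) \<in> A i}) \<subseteq> sets (tv_measure (pth x))"
        using A(1) section_borel by auto
      show "disjoint_family (\<lambda>i. {s. (s, x) \<in> A i})"
        using A(2) unfolding disjoint_family_on_def by auto
    qed
    also have "(\<Union>i. {s. (s, x) \<in> A i}) = {s. (s, x) \<in> \<Union> (range A)}" by auto
    finally show "(\<Sum>i. emeasure (tv_measure (pth x)) {s. (s, x) \<in> A i}) =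
          emeasure (tv_measure (pth x)) {s. (s, x) \<in> \<Union> (range A)}" .
  qed
  finally show "(\<Sum>i. mufun N d pth (A i)) = mufun N d pth (\<Union> (range A))" .
qed

lemma mufun_pos: "positive (sets (RR N d)) (mufun N d pth)"
  unfolding positive_def mufun_def by simp

lemma emeasure_Dmeas: "A \<in> sets (RR N d) \<Longrightarrow> emeasure (Dmeas N d pth) A = mufun N d pth A"
  unfolding Dmeas_eq
  by (rule emeasure_measure_of_sigma[OF sets.sigma_algebra_axioms mufun_pos mufun_ca])

lemma finite_Lam: "finite (Lam N d)"
proof -
  have "Lam N d = {xs. set xs \<subseteq> {..<N} \<and> length xs = d}" unfolding Lam_def by auto
  thus ?thesis using finite_lists_length_eq[of "{..<N}" d] by simp
qed

lemma rect_RR: "A \<in> sets borel \<Longrightarrow> A \<subseteq> {0..} \<Longrightarrow> X \<subseteq> Lam N d \<Longrightarrow> A \<times> X \<in> sets (RR N d)"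
  unfolding sets_RR_iff Dset_def by (auto intro!: pair_measureI)

lemma mufun_rect:
  assumes "A \<subseteq> {0..}" "X \<subseteq> Lam N d"
  shows "mufun N d pth (A \<times> X) = (\<Sum>x\<in>X. ennreal ((1 / real N) ^ d) * emeasure (tv_measure (pth x)) A)"
proof -
  have "mufun N d pth (A \<times> X) = (\<Sum>x\<in>Lam N d. if x \<in> X then ennreal ((1 / real N) ^ d) * emeasure (tv_measure (pth x)) A else 0)"
    unfolding mufun_def by (intro sum.cong) auto
  also have "\<dots> = (\<Sum>x\<in>X. ennreal ((1 / real N) ^ d) * emeasure (tv_measure (pth x)) A)"
    using assms(2) finite_Lam by (simp add: sum.If_cases Int_absorb1)
  finally show ?thesis .
qed



lemma det_main:
  fixes N d n :: nat and pth :: "nat list \<Rightarrow> real \<Rightarrow> real"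
  assumes atoms: "\<And>x t. x \<in> Lam N d \<Longrightarrow> jump (pth x) t = 0 \<Longrightarrow> emeasure (tv_measure (pth x)) {t} = 0"
    and finI: "\<And>x a b. x \<in> Lam N d \<Longrightarrow> emeasure (tv_measure (pth x)) {a<..b} < \<infinity>"
    and cnt: "\<And>x. x \<in> Lam N d \<Longrightarrow> countable {t. jump (pth x) t \<noteq> 0}"
    and disj: "\<And>x y t. x \<in> Lam N d \<Longrightarrow> y \<in> Lam N d \<Longrightarrow> x \<noteq> y \<Longrightarrow> jump (pth x) t * jump (pth y) t = 0"
  shows "Cset N d n \<in> null_sets (PiM {..<n} (\<lambda>_. Dmeas N d pth))"
proof -
  define \<mu> where "\<mu> = Dmeas N d pth"
  define c where "c = ennreal ((1 / real N) ^ d)"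
  define I where "I = {..<n}"
  have smu: "sets \<mu> = sets (RR N d)" unfolding \<mu>_def by (rule sets_Dmeas)
  have spmu: "space \<mu> = Dset N d" unfolding \<mu>_def by (rule space_Dmeas)
  have emu: "A \<in> sets (RR N d) \<Longrightarrow> emeasure \<mu> A = mufun N d pth A" for A
    unfolding \<mu>_def by (rule emeasure_Dmeas)
  have sf: "sigma_finite_measure \<mu>"
    unfolding sigma_finite_measure_def
  proof (intro exI conjI)
    let ?A = "(\<lambda>(T::nat, x). {0..real T} \<times> {x}) ` (UNIV \<times> Lam N d)"
    show "countable ?A" using finite_Lam by (intro countable_image countable_SIGMA) (auto intro: countable_finite)
    show "?A \<subseteq> sets \<mu>" unfolding smu by (auto intro!: rect_RR)
    show "\<Union> ?A = space \<mu>" unfolding spmu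
    proof
      show "\<Union> ?A \<subseteq> Dset N d" unfolding Dset_def by auto
      show "Dset N d \<subseteq> \<Union> ?A"
      proof
        fix p assume "p \<in> Dset N d"
        then obtain s x where p: "p = (s, x)" "s \<ge> 0" "x \<in> Lam N d" unfolding Dset_def by auto
        have "s \<le> real (nat \<lceil>s\<rceil>)" by linarith
        have m1: "{0..real (nat \<lceil>s\<rceil>)} \<times> {x} \<in> ?A"
          using p by (intro rev_image_eqI[of "(nat \<lceil>s\<rceil>, x)"]) auto
        have m2: "p \<in> {0..real (nat \<lceil>s\<rceil>)} \<times> {x}" using p \<open>s \<le> real (nat \<lceil>s\<rceil>)\<close> by simp
        show "p \<in> \<Union> ?A" by (rule UnionI[OF m1 m2])
      qed
    qed
    show "\<forall>a\<in>?A. emeasure \<mu> a \<noteq> \<infinity>"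
    proof
      fix a assume "a \<in> ?A"
      then obtain T x where a: "a = {0..real T} \<times> {x}" "x \<in> Lam N d" by auto
      have ea: "emeasure \<mu> a = c * emeasure (tv_measure (pth x)) {0..real T}"
        unfolding a(1) c_def using a(2) by (subst emu) (auto intro!: rect_RR simp: mufun_rect)
      have "emeasure (tv_measure (pth x)) {0..real T} \<le> emeasure (tv_measure (pth x)) {-1<..real T}"
        by (intro emeasure_mono) auto
      also have "\<dots> < \<infinity>" by (rule finI[OF a(2)])
      finally have "emeasure (tv_measure (pth x)) {0..real T} \<noteq> \<infinity>" by simp
      hence "c * emeasure (tv_measure (pth x)) {0..real T} \<noteq> \<infinity>"
        unfolding c_def by (simp add: ennreal_mult_eq_top_iff)
      thus "emeasure \<mu> a \<noteq> \<infinity>" using ea by simp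
    qed
  qed
  interpret PS: product_sigma_finite "\<lambda>_. \<mu>" by (rule product_sigma_finite.intro) (rule sf)
  define E where "E = {p \<in> Dset N d. \<exists>x'\<in>Lam N d. x' \<noteq> snd p \<and> jump (pth x') (fst p) \<noteq> 0}"
  have Esub: "E \<subseteq> Dset N d" unfolding E_def by auto
  have cntU: "countable (\<Union>x'\<in>Lam N d. {t. jump (pth x') t \<noteq> 0})"
    using cnt finite_Lam by (intro countable_UN) (auto intro: countable_finite)
  have Ecnt: "countable E"
  proof (rule countable_subset)
    show "E \<subseteq> (\<Union>x'\<in>Lam N d. {t. jump (pth x') t \<noteq> 0}) \<times> Lam N d" unfolding E_def Dset_def by auto
    show "countable ((\<Union>x'\<in>Lam N d. {t. jump (pth x') t \<noteq> 0}) \<times> Lam N d)"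
      using cntU finite_Lam by (intro countable_SIGMA) (auto intro: countable_finite)
  qed
  have Esets: "E \<in> sets (RR N d)"
  proof (rule sets.countable[OF _ Ecnt])
    fix p assume "p \<in> E"
    hence "fst p \<ge> 0" "snd p \<in> Lam N d" unfolding E_def Dset_def by auto
    hence "{fst p} \<times> {snd p} \<in> sets (RR N d)" by (intro rect_RR) auto
    moreover have "{p} = {fst p} \<times> {snd p}" by (cases p) auto
    ultimately show "{p} \<in> sets (RR N d)" by (simp only:)
  qed
  have E0: "emeasure \<mu> E = 0"
  proof -
    have "emeasure \<mu> E = mufun N d pth E" by (rule emu[OF Esets])
    also have "\<dots> = 0" unfolding mufun_def
    proof (intro sum.neutral ballI)
      fix y assume y: "y \<in> Lam N d"
      have "emeasure (tv_measure (pth y)) {s. (s, y) \<in> E} = 0"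
      proof -
        let ?S = "{s. (s, y) \<in> E}"
        have "?S \<subseteq> fst ` E" by (auto intro: rev_image_eqI)
        hence "countable ?S" by (rule countable_subset[OF _ countable_image[OF Ecnt]])
        hence "emeasure (tv_measure (pth y)) ?S = (\<integral>\<^sup>+s. emeasure (tv_measure (pth y)) {s} \<partial>count_space ?S)"
          by (intro emeasure_countable_singleton) auto
        also have "\<dots> = (\<integral>\<^sup>+s. 0 \<partial>count_space ?S)"
        proof (intro nn_integral_cong)
          fix s assume "s \<in> space (count_space ?S)"
          then obtain x' where x': "x' \<in> Lam N d" "x' \<noteq> y" "jump (pth x') s \<noteq> 0" unfolding E_def by auto
          have "jump (pth y) s = 0" using disj[OF x'(1) y x'(2), of s] x'(3) by simp
          thus "emeasure (tv_measure (pth y)) {s} = 0" by (rule atoms[OF y])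
        qed
        finally show ?thesis by simp
      qed
      thus "ennreal ((1 / real N) ^ d) * emeasure (tv_measure (pth y)) {s. (s, y) \<in> E} = 0" by simp
    qed
    finally show ?thesis .
  qed
  have fst_m: "fst \<in> borel_measurable \<mu>"
    unfolding measurable_cong_sets[OF smu refl] RR_def by (intro measurable_restrict_space1 measurable_fst)
  have snd_m: "snd \<in> measurable \<mu> (count_space UNIV)"
    unfolding measurable_cong_sets[OF smu refl] RR_def by (intro measurable_restrict_space1 measurable_snd)
  define C where "C i j = {z \<in> space (PiM I (\<lambda>_. \<mu>)). fst (z i) = fst (z j) \<and> snd (z i) \<noteq> snd (z j)}" for i j
  have Cnull: "C i j \<in> null_sets (PiM I (\<lambda>_. \<mu>))" if ij: "i \<in> I" "j \<in> I" "i \<noteq> j" for i j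
  proof -
    have f1: "(\<lambda>z. fst (z k)) \<in> borel_measurable (PiM I (\<lambda>_. \<mu>))" if "k \<in> I" for k
      using measurable_compose[OF measurable_component_singleton[OF that] fst_m] by simp
    have s1: "(\<lambda>z. snd (z k)) \<in> measurable (PiM I (\<lambda>_. \<mu>)) (count_space UNIV)" if "k \<in> I" for k
      using measurable_compose[OF measurable_component_singleton[OF that] snd_m] by simp
    have p: "(\<lambda>z. (snd (z i), snd (z j))) \<in> measurable (PiM I (\<lambda>_. \<mu>)) (count_space UNIV)"
      using measurable_Pair[OF s1[OF ij(1)] s1[OF ij(2)]] pair_measure_countable[of "UNIV :: nat list set" "UNIV :: nat list set"]
      by simp
    have Cs: "C i j \<in> sets (PiM I (\<lambda>_. \<mu>))"
    proof -
      have "{z \<in> space (PiM I (\<lambda>_. \<mu>)). fst (z i) = fst (z j)} \<in> sets (PiM I (\<lambda>_. \<mu>))"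
        by (rule measurable_equality_set[OF f1[OF ij(1)] f1[OF ij(2)]])
      moreover have "(\<lambda>z. (snd (z i), snd (z j))) -` {q. fst q \<noteq> snd q} \<inter> space (PiM I (\<lambda>_. \<mu>)) \<in> sets (PiM I (\<lambda>_. \<mu>))"
        by (rule measurable_sets[OF p]) simp
      ultimately have "{z \<in> space (PiM I (\<lambda>_. \<mu>)). fst (z i) = fst (z j)} \<inter>
         ((\<lambda>z. (snd (z i), snd (z j))) -` {q. fst q \<noteq> snd q} \<inter> space (PiM I (\<lambda>_. \<mu>))) \<in> sets (PiM I (\<lambda>_. \<mu>))"
        by blast
      also have "{z \<in> space (PiM I (\<lambda>_. \<mu>)). fst (z i) = fst (z j)} \<inter>
         ((\<lambda>z. (snd (z i), snd (z j))) -` {q. fst q \<noteq> snd q} \<inter> space (PiM I (\<lambda>_. \<mu>))) = C i j"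
        unfolding C_def by auto
      finally show ?thesis .
    qed
    define I' where "I' = I - {i}"
    have II: "I = insert i I'" "i \<notin> I'" "finite I'" "j \<in> I'" using ij unfolding I'_def I_def by auto
    have AE: "AE x in PiM I' (\<lambda>_. \<mu>). x j \<notin> E"
    proof (rule AE_I')
      let ?N = "Pi\<^sub>E I' (\<lambda>k. if k = j then E else Dset N d)"
      have "emeasure (PiM I' (\<lambda>_. \<mu>)) ?N = (\<Prod>k\<in>I'. emeasure \<mu> (if k = j then E else Dset N d))"
        using II Esets Dset_sets smu
        by (intro PS.emeasure_PiM) (auto simp: sets_RR_iff)
      also have "\<dots> = 0" using II E0 by (intro prod_zero bexI[of _ j]) auto
      finally show "?N \<in> null_sets (PiM I' (\<lambda>_. \<mu>))"
        using II Esets Dset_sets smu by (intro null_setsI sets_PiM_I_finite) (auto simp: sets_RR_iff)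
      show "{x \<in> space (PiM I' (\<lambda>_. \<mu>)). \<not> x j \<notin> E} \<subseteq> ?N"
        using Esub by (auto simp: space_PiM spmu PiE_iff extensional_def)
    qed
    have inner: "(\<integral>\<^sup>+ y. indicator (C i j) (x(i := y)) \<partial>\<mu>) = 0"
      if x: "x \<in> space (PiM I' (\<lambda>_. \<mu>))" "x j \<notin> E" for x
    proof -
      have xj: "x j \<in> Dset N d" using x(1) II by (auto simp: space_PiM spmu)
      define R where "R = {fst (x j)} \<times> (Lam N d - {snd (x j)})"
      have Rs: "R \<in> sets (RR N d)" unfolding R_def using xj by (intro rect_RR) (auto simp: Dset_def)
      have "(\<integral>\<^sup>+ y. indicator (C i j) (x(i := y)) \<partial>\<mu>) \<le> (\<integral>\<^sup>+ y. indicator R y \<partial>\<mu>)"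
      proof (intro nn_integral_mono)
        fix y assume "y \<in> space \<mu>"
        show "indicator (C i j) (x(i := y)) \<le> (indicator R y :: ennreal)"
        proof (cases "x(i := y) \<in> C i j")
          case True
          hence "x(i := y) \<in> I \<rightarrow>\<^sub>E Dset N d" unfolding C_def by (simp add: space_PiM spmu)
          from PiE_mem[OF this ij(1)] have "(x(i := y)) i \<in> Dset N d" .
          hence "y \<in> R" using True ij(3) unfolding C_def R_def Dset_def by (auto simp: prod_eq_iff)
          thus ?thesis using True by simp
        qed simp
      qed
      also have "\<dots> = emeasure \<mu> R" using Rs smu by simp
      also have "\<dots> = mufun N d pth R" by (rule emu[OF Rs])
      also have "\<dots> = (\<Sum>x'\<in>Lam N d - {snd (x j)}. c * emeasure (tv_measure (pth x')) {fst (x j)})"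
        unfolding R_def c_def using xj by (intro mufun_rect) (auto simp: Dset_def)
      also have "\<dots> = 0"
      proof (intro sum.neutral ballI)
        fix x' assume x': "x' \<in> Lam N d - {snd (x j)}"
        hence "jump (pth x') (fst (x j)) = 0" using x(2) xj unfolding E_def by auto
        thus "c * emeasure (tv_measure (pth x')) {fst (x j)} = 0" using atoms x' by simp
      qed
      finally show ?thesis by simp
    qed
    have "emeasure (PiM I (\<lambda>_. \<mu>)) (C i j) = (\<integral>\<^sup>+ z. indicator (C i j) z \<partial>PiM I (\<lambda>_. \<mu>))"
      using Cs by simp
    also have "\<dots> = (\<integral>\<^sup>+ x. (\<integral>\<^sup>+ y. indicator (C i j) (x(i := y)) \<partial>\<mu>) \<partial>PiM I' (\<lambda>_. \<mu>))"
      unfolding II(1) by (rule PS.product_nn_integral_insert[OF II(3,2)]) (use Cs II(1) in simp)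
    also have "\<dots> = (\<integral>\<^sup>+ x. 0 \<partial>PiM I' (\<lambda>_. \<mu>))"
    proof (intro nn_integral_cong_AE)
      show "AE x in PiM I' (\<lambda>_. \<mu>). (\<integral>\<^sup>+ y. indicator (C i j) (x(i := y)) \<partial>\<mu>) = 0"
        using AE AE_space[of "PiM I' (\<lambda>_. \<mu>)"] by eventually_elim (simp add: inner)
    qed
    finally show ?thesis using Cs by (intro null_setsI) auto
  qed
  have spI: "space (PiM I (\<lambda>_. \<mu>)) = {..<n} \<rightarrow>\<^sub>E Dset N d" by (simp add: space_PiM spmu I_def)
  have "Cset N d n = (\<Union>i\<in>I. \<Union>j\<in>I - {i}. C i j)"
  proof
    show "Cset N d n \<subseteq> (\<Union>i\<in>I. \<Union>j\<in>I - {i}. C i j)"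
    proof
      fix z assume "z \<in> Cset N d n"
      then obtain i j where z: "z \<in> {..<n} \<rightarrow>\<^sub>E Dset N d" "i < n" "j < n" "i \<noteq> j"
        "fst (z i) = fst (z j)" "snd (z i) \<noteq> snd (z j)" unfolding Cset_def by blast
      hence "z \<in> C i j" unfolding C_def spI by blast
      moreover have "i \<in> I" "j \<in> I - {i}" using z unfolding I_def by auto
      ultimately show "z \<in> (\<Union>i\<in>I. \<Union>j\<in>I - {i}. C i j)" by blast
    qed
    show "(\<Union>i\<in>I. \<Union>j\<in>I - {i}. C i j) \<subseteq> Cset N d n"
    proof
      fix z assume "z \<in> (\<Union>i\<in>I. \<Union>j\<in>I - {i}. C i j)"
      then obtain i j where ij: "i \<in> I" "j \<in> I - {i}" "z \<in> C i j" by blast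
      hence z: "z \<in> {..<n} \<rightarrow>\<^sub>E Dset N d" "fst (z i) = fst (z j)" "snd (z i) \<noteq> snd (z j)"
        unfolding C_def spI by auto
      have "z i \<in> Dset N d" using PiE_mem[OF z(1)] ij(1) unfolding I_def by blast
      hence "fst (z i) \<ge> 0" unfolding Dset_def by auto
      hence "fst (z i) \<in> {0..<real (nat \<lceil>fst (z i)\<rceil> + 1)}" by simp linarith
      moreover have "i < n" "j < n" "i \<noteq> j" using ij unfolding I_def by auto
      ultimately show "z \<in> Cset N d n" using z unfolding Cset_def by blast
    qed
  qed
  also have "\<dots> \<in> null_sets (PiM I (\<lambda>_. \<mu>))"
    using Cnull by (intro null_sets_UN' countable_finite finite_Diff) (auto simp: I_def)
  finally show ?thesis unfolding \<mu>_def I_def .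
qed



lemma lip_int:
  fixes g :: "real \<Rightarrow> real"
  assumes meas: "\<And>t. t \<ge> 0 \<Longrightarrow> g \<in> borel_measurable (restrict_space borel {0..t})"
    and bd: "\<And>s. s \<ge> 0 \<Longrightarrow> \<bar>g s\<bar> \<le> B"
    and r: "0 \<le> r'" "r' \<le> r"
  shows "\<bar>(LINT s:{0..r}|lborel. g s) - (LINT s:{0..r'}|lborel. g s)\<bar> \<le> B * (r - r')"
proof -
  have int: "integrable lborel (\<lambda>s. indicator {0..t} s * g s)" if t: "t \<ge> 0" for t
  proof (rule integrableI_bounded_set[where A="{0..t}" and B=B])
    show "{0..t} \<in> sets lborel" by simp
    have "(\<lambda>s. indicator {0..t} s *\<^sub>R g s) \<in> borel_measurable borel"
      using meas[OF t] by (subst borel_measurable_restrict_space_iff[symmetric]) auto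
    thus "(\<lambda>s. indicator {0..t} s * g s) \<in> borel_measurable lborel" by simp
    show "emeasure lborel {0..t} < \<infinity>" using t by (simp add: emeasure_lborel_Icc)
    show "AE x\<in>{0..t} in lborel. norm (indicator {0..t} x * g x) \<le> B" using bd by auto
    show "AE x in lborel. x \<notin> {0..t} \<longrightarrow> indicator {0..t} x * g x = 0" by simp
  qed
  have "(LINT s:{0..r}|lborel. g s) - (LINT s:{0..r'}|lborel. g s) =
        (LINT s|lborel. indicator {0..r} s * g s - indicator {0..r'} s * g s)"
    unfolding set_lebesgue_integral_def using int r by (simp add: Bochner_Integration.integral_diff)
  also have "\<dots> = (LINT s|lborel. indicator {r'<..r} s * g s)"
    using r by (intro Bochner_Integration.integral_cong) (auto simp: indicator_def)
  finally have eq: "(LINT s:{0..r}|lborel. g s) - (LINT s:{0..r'}|lborel. g s) = (LINT s|lborel. indicator {r'<..r} s * g s)" .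
  have int2: "integrable lborel (\<lambda>s. indicator {r'<..r} s * g s)"
  proof -
    have "integrable lborel (\<lambda>s. indicator {0..r} s * g s - indicator {0..r'} s * g s)"
      using int r by auto
    also have "(\<lambda>s. indicator {0..r} s * g s - indicator {0..r'} s * g s) = (\<lambda>s. indicator {r'<..r} s * g s)"
      using r by (auto simp: indicator_def fun_eq_iff)
    finally show ?thesis .
  qed
  have int3: "integrable lborel (\<lambda>s. B * indicator {r'<..r} s)"
    using r by (intro integrable_mult_right integrable_real_indicator) (auto simp: emeasure_lborel_Ioc)
  have "norm (LINT s|lborel. indicator {r'<..r} s * g s) \<le> (LINT s|lborel. B * indicator {r'<..r} s)"
    using r bd by (intro Bochner_Integration.integral_norm_bound_integral int2 int3) (auto simp: indicator_def)
  also have "\<dots> = B * (r - r')" using r by simp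
  finally show ?thesis using eq by simp
qed



lemma one_path:
  fixes f :: "real \<Rightarrow> real" and g :: "real \<Rightarrow> real"
  assumes cad: "cadlag_on_nonneg f" and dpos: "\<delta> > 0"
    and A3: "\<And>t. t \<ge> 0 \<Longrightarrow> jump f t \<noteq> 0 \<Longrightarrow> \<bar>jump f t\<bar> = \<delta>"
    and A4: "\<And>t. t \<ge> 0 \<Longrightarrow> f t = infsum (\<lambda>s. jump f s) {0..t} - K0 * (LINT s:{0..t}|lborel. g s)"
    and meas: "\<And>t. t \<ge> 0 \<Longrightarrow> g \<in> borel_measurable (restrict_space borel {0..t})"
    and bd: "\<And>s. s \<ge> 0 \<Longrightarrow> \<bar>g s\<bar> \<le> B" and K0: "K0 \<ge> 0"
  shows "\<And>t. jump f t = 0 \<Longrightarrow> emeasure (tv_measure f) {t} = 0"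
    and "\<And>a b. emeasure (tv_measure f) {a<..b} < \<infinity>"
    and "countable {t. jump f t \<noteq> 0}"
proof -
  have J: "\<delta> \<le> \<bar>jump f t\<bar>" if "jump f t \<noteq> 0" for t
  proof (cases "t \<le> 0")
    case True thus ?thesis using that by (simp add: jump_def)
  next
    case False thus ?thesis using A3[of t] that by simp
  qed
  have fin: "finite ({t. jump f t \<noteq> 0} \<inter> {..T})" for T
    by (rule cadlag_jumps_finite[OF cad dpos J])
  define L where "L t = K0 * (LINT s:{0..t}|lborel. g s)" for t
  have repr: "f t = (\<Sum>s\<in>{t. jump f t \<noteq> 0} \<inter> {0..t}. jump f s) - L t" if t: "t \<ge> 0" for t
  proof -
    have "infsum (\<lambda>s. jump f s) {0..t} = infsum (\<lambda>s. jump f s) ({t. jump f t \<noteq> 0} \<inter> {0..t})"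
      by (rule infsum_cong_neutral) auto
    also have "\<dots> = (\<Sum>s\<in>{t. jump f t \<noteq> 0} \<inter> {0..t}. jump f s)"
      by (intro infsum_finite finite_subset[OF _ fin[of t]]) auto
    finally show ?thesis using A4[OF t] unfolding L_def by simp
  qed
  have Lip: "\<bar>L r - L r'\<bar> \<le> (K0 * B) * (r - r')" if "0 \<le> r'" "r' \<le> r" for r r'
  proof -
    have "\<bar>L r - L r'\<bar> = K0 * \<bar>(LINT s:{0..r}|lborel. g s) - (LINT s:{0..r'}|lborel. g s)\<bar>"
      unfolding L_def using K0 by (simp add: abs_mult right_diff_distrib[symmetric])
    also have "\<dots> \<le> K0 * (B * (r - r'))"
      using K0 by (intro mult_left_mono lip_int[OF meas bd that]) auto
    finally show ?thesis by simp
  qed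
  note S = tv_struct[OF fin repr Lip]
  show "\<And>t. jump f t = 0 \<Longrightarrow> emeasure (tv_measure f) {t} = 0" by (rule S(3))
  show "\<And>a b. emeasure (tv_measure f) {a<..b} < \<infinity>" by (rule S(4))
  have "{t. jump f t \<noteq> 0} = (\<Union>T::nat. {t. jump f t \<noteq> 0} \<inter> {..real T})"
  proof safe
    fix t assume "jump f t \<noteq> 0"
    moreover have "t \<le> real (nat \<lceil>t\<rceil>)" by linarith
    ultimately show "t \<in> (\<Union>T::nat. {t. jump f t \<noteq> 0} \<inter> {..real T})" by blast
  qed
  also have "countable \<dots>" by (rule countable_UN[OF countableI_type]) (rule countable_finite[OF fin])
  finally show "countable {t. jump f t \<noteq> 0}" .
qed

theorem lemma2p8:
  fixes P :: "'a measure" and F :: "real \<Rightarrow> 'a measure"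
    and N d n :: nat and k c Cb :: real
    and M :: "nat list \<Rightarrow> real \<Rightarrow> 'a \<Rightarrow> real"
    and Cq Cd :: "real \<Rightarrow> nat list \<Rightarrow> 'a \<Rightarrow> real"
  assumes "prob_space P" and "usual_filtration P F"
    and "N \<ge> 1" and "d \<ge> 1" and "n \<ge> 2"
    and mart: "\<And>x. x \<in> Lam N d \<Longrightarrow> cadlag_sq_int_martingale P F (M x)"
    \<comment> \<open>(A1)\<close>
    and A1_cross: "\<And>x y. x \<in> Lam N d \<Longrightarrow> y \<in> Lam N d \<Longrightarrow> x \<noteq> y \<Longrightarrow>
                    martingale P F (\<lambda>t \<omega>. M x t \<omega> * M y t \<omega>)"
    and A1_diag: "\<And>x. x \<in> Lam N d \<Longrightarrow>
                    martingale P F (\<lambda>t \<omega>. (M x t \<omega>)\<^sup>2 -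
                      real N ^ d * (LINT s:{0..t}|lborel. Cq s x \<omega>))"
    and A1_prog: "\<And>x. x \<in> Lam N d \<Longrightarrow> progressive F (\<lambda>s \<omega>. Cq s x \<omega>)"
    and A1_bd: "AE \<omega> in P. \<forall>x\<in>Lam N d. \<forall>s\<ge>0. \<bar>Cq s x \<omega>\<bar> \<le> Cb"
    \<comment> \<open>(A2)\<close>
    and A2: "\<And>T. T > 0 \<Longrightarrow> AE \<omega> in P. \<forall>x\<in>Lam N d. \<forall>y\<in>Lam N d. x \<noteq> y \<longrightarrow>
               (\<forall>t\<in>{0..T}. jump (\<lambda>r. M x r \<omega>) t * jump (\<lambda>r. M y r \<omega>) t = 0)"
    \<comment> \<open>(A3)\<close>
    and "k > - real d / 2" and "c > 0"
    and A3: "AE \<omega> in P. \<forall>x\<in>Lam N d. \<forall>t\<ge>0. jump (\<lambda>r. M x r \<omega>) t \<noteq> 0 \<longrightarrow>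
               \<bar>jump (\<lambda>r. M x r \<omega>) t\<bar> = c * (1 / real N) powr k"
    \<comment> \<open>(A4)\<close>
    and A4_prog: "\<And>x. x \<in> Lam N d \<Longrightarrow> progressive F (\<lambda>s \<omega>. Cd s x \<omega>)"
    and A4_bd: "AE \<omega> in P. \<forall>x\<in>Lam N d. \<forall>s\<ge>0. \<bar>Cd s x \<omega>\<bar> \<le> Cb"
    and A4: "AE \<omega> in P. \<forall>x\<in>Lam N d. \<forall>t\<ge>0.
               M x t \<omega> = infsum (\<lambda>s. jump (\<lambda>r. M x r \<omega>) s) {0..t}
                 - real N powr (k + real d) * (LINT s:{0..t}|lborel. Cd s x \<omega>)"
  shows "AE \<omega> in P. Cset N d n \<in> null_sets (PiM {..<n} (\<lambda>_. Dmeas N d (\<lambda>x t. M x t \<omega>)))"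
proof -
  have finL: "finite (Lam N d)" by (rule finite_Lam)
  have Npos: "real N > 0" using assms(3) by simp
  define \<delta> where "\<delta> = c * (1 / real N) powr k"
  have dpos: "\<delta> > 0" unfolding \<delta>_def using \<open>c > 0\<close> Npos by simp
  have K0: "real N powr (k + real d) \<ge> 0" by simp
  have filt: "filtration (space P) F" using assms(2) unfolding usual_filtration_def by simp
  have spF: "space (F t) = space P" for t using filt by (simp add: filtration.space_F)
  have cadAE: "AE \<omega> in P. \<forall>x\<in>Lam N d. cadlag_on_nonneg (\<lambda>t. M x t \<omega>)"
    using finL by (rule AE_finite_allI) (use mart in \<open>simp add: cadlag_sq_int_martingale_def\<close>)
  have A2AE: "AE \<omega> in P. \<forall>T::nat. \<forall>x\<in>Lam N d. \<forall>y\<in>Lam N d. x \<noteq> y \<longrightarrow>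
      (\<forall>t\<in>{0..real (Suc T)}. jump (\<lambda>r. M x r \<omega>) t * jump (\<lambda>r. M y r \<omega>) t = 0)"
    unfolding AE_all_countable by (intro allI A2) simp
  show ?thesis
    using cadAE A2AE A3 A4_bd A4 AE_space
  proof eventually_elim
    case (elim \<omega>)
    have P1: "(\<forall>t. jump (\<lambda>t. M x t \<omega>) t = 0 \<longrightarrow> emeasure (tv_measure (\<lambda>t. M x t \<omega>)) {t} = 0) \<and>
              (\<forall>a b. emeasure (tv_measure (\<lambda>t. M x t \<omega>)) {a<..b} < \<infinity>) \<and>
              countable {t. jump (\<lambda>t. M x t \<omega>) t \<noteq> 0}" if x: "x \<in> Lam N d" for x
    proof -
      have meas: "(\<lambda>s. Cd s x \<omega>) \<in> borel_measurable (restrict_space borel {0..t})" if "t \<ge> 0" for t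
      proof -
        have "(\<lambda>(s, \<omega>). Cd s x \<omega>) \<in> borel_measurable (restrict_space borel {0..t} \<Otimes>\<^sub>M F t)"
          using A4_prog[OF x] that unfolding progressive_def by simp
        from measurable_Pair1[OF this, of \<omega>] show ?thesis using elim(6) spF by simp
      qed
      note R = one_path[of "\<lambda>t. M x t \<omega>" \<delta> "real N powr (k + real d)" "\<lambda>s. Cd s x \<omega>" Cb]
      have "(\<And>t. jump (\<lambda>t. M x t \<omega>) t = 0 \<Longrightarrow> emeasure (tv_measure (\<lambda>t. M x t \<omega>)) {t} = 0)"
           "(\<And>a b. emeasure (tv_measure (\<lambda>t. M x t \<omega>)) {a<..b} < \<infinity>)"
           "countable {t. jump (\<lambda>t. M x t \<omega>) t \<noteq> 0}"
        using R[OF _ dpos _ _ meas _ K0] elim x unfolding \<delta>_def by auto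
      thus ?thesis by blast
    qed
    show ?case
    proof (rule det_main)
      fix x t assume "x \<in> Lam N d" "jump (\<lambda>t. M x t \<omega>) t = 0"
      thus "emeasure (tv_measure (\<lambda>t. M x t \<omega>)) {t} = 0" using P1 by blast
    next
      fix x a b assume "x \<in> Lam N d"
      thus "emeasure (tv_measure (\<lambda>t. M x t \<omega>)) {a<..b} < \<infinity>" using P1 by blast
    next
      fix x assume "x \<in> Lam N d"
      thus "countable {t. jump (\<lambda>t. M x t \<omega>) t \<noteq> 0}" using P1 by blast
    next
      fix x y t assume xy: "x \<in> Lam N d" "y \<in> Lam N d" "x \<noteq> y"
      show "jump (\<lambda>t. M x t \<omega>) t * jump (\<lambda>t. M y t \<omega>) t = 0"
      proof (cases "t \<le> 0")
        case True thus ?thesis by (simp add: jump_def)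
      next
        case False
        have "t \<le> real (Suc (nat \<lceil>t\<rceil>))" by linarith
        hence "t \<in> {0..real (Suc (nat \<lceil>t\<rceil>))}" using False by simp
        thus ?thesis using elim(2) xy by blast
      qed
    qed
  qed
qed

end
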